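(* Let $\mathbf A$ be a Pavelka algebra and $\exists\colon A\to A$ a closure operator, and put $\forall(x)=\neg\exists(\neg x)$. Then $(\mathbf A,\exists)$ is a monadic Pavelka algebra if and only if $(\mathbf A,\forall,\forall)$ is a tense Pavelka algebra.
   Context: An MV-algebra $(A;\oplus,\neg,0)$ carries derived operations $1=\neg0$, $x\cdot y=\neg(\neg x\oplus\neg y)$, $x\rightarrow y=\neg x\oplus y$, lattice operations $\vee,\wedge$ of the order $x\le y$ iff $\neg x\oplus y=1$. A Pavelka algebra is $\mathbf A=(A;\oplus,\neg,\{\mathbf r\mid r\in[0,1]\cap\mathbb Q\})$ with $(A;\oplus,\neg,\mathbf 0)$ an MV-algebra, $\mathbf r\oplus\mathbf s=\mathbf t$ whenever $\min\{r+s,1\}=t$, and $\neg\mathbf r=\mathbf s$ whenever $1-r=s$. A closure operator is a monotone $C$ with $x\le C(x)$, $C(C(x))=C(x)$. A monadic Pavelka algebra is a pair $(\mathbf A,\exists)$ with $\exists$ a closure operator on $A$ such that $\exists(\neg\exists(x))=\neg\exists(x)$ and $\mathbf r\cdot\exists(x)=\exists(\mathbf r\cdot x)$ for all $x\in A$ and constants $\mathbf r$. A tense Pavelka algebra is $(\mathbf A,G,H)$ with $G,H\colon A\to A$ such that for all $x,y$ and constants $\mathbf r$: (PT1) $G(x\wedge y)=G(x)\wedge G(y)$, $H(x\wedge y)=H(x)\wedge H(y)$; (PT2) $\mathbf r\rightarrow G(x)=G(\mathbf r\rightarrow x)$, $\mathbf r\rightarrow H(x)=H(\mathbf r\rightarrow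 x)$; (PT3) $\neg H(\neg G(x))\le x$, $\neg G(\neg H(x))\le x$. *)

theory Defs
  imports Complex_Main
begin

text \<open>An algebra is given by a carrier A, addition pl (oplus), negation ng, and a
  family of rational constants cst r (meaningful for r in [0,1] cap Q).
  The MV-zero is the constant cst 0.\<close>

definition mv_algebra :: "'a set \<Rightarrow> ('a \<Rightarrow> 'a \<Rightarrow> 'a) \<Rightarrow> ('a \<Rightarrow> 'a) \<Rightarrow> 'a \<Rightarrow> bool" where
  "mv_algebra A pl ng z \<longleftrightarrow>
     z \<in> A \<and>
     (\<forall>x\<in>A. \<forall>y\<in>A. pl x y \<in> A) \<and> (\<forall>x\<in>A. ng x \<in> A) \<and>
     (\<forall>x\<in>A. \<forall>y\<in>A. \<forall>w\<in>A. pl x (pl y w) = pl (pl x y) w) \<and>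
     (\<forall>x\<in>A. \<forall>y\<in>A. pl x y = pl y x) \<and>
     (\<forall>x\<in>A. pl x z = x) \<and>
     (\<forall>x\<in>A. ng (ng x) = x) \<and>
     (\<forall>x\<in>A. pl x (ng z) = ng z) \<and>
     (\<forall>x\<in>A. \<forall>y\<in>A. pl (ng (pl (ng x) y)) y = pl (ng (pl (ng y) x)) x)"

definition rconst :: "rat set" where
  "rconst = {r. 0 \<le> r \<and> r \<le> 1}"

definition mv_one :: "('a \<Rightarrow> 'a) \<Rightarrow> (rat \<Rightarrow> 'a) \<Rightarrow> 'a" where
  "mv_one ng cst = ng (cst 0)"

definition mv_mult :: "('a \<Rightarrow> 'a \<Rightarrow> 'a) \<Rightarrow> ('a \<Rightarrow> 'a) \<Rightarrow> 'a \<Rightarrow> 'a \<Rightarrow> 'a" where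
  "mv_mult pl ng x y = ng (pl (ng x) (ng y))"

definition mv_impl :: "('a \<Rightarrow> 'a \<Rightarrow> 'a) \<Rightarrow> ('a \<Rightarrow> 'a) \<Rightarrow> 'a \<Rightarrow> 'a \<Rightarrow> 'a" where
  "mv_impl pl ng x y = pl (ng x) y"

definition mv_le :: "('a \<Rightarrow> 'a \<Rightarrow> 'a) \<Rightarrow> ('a \<Rightarrow> 'a) \<Rightarrow> (rat \<Rightarrow> 'a) \<Rightarrow> 'a \<Rightarrow> 'a \<Rightarrow> bool" where
  "mv_le pl ng cst x y \<longleftrightarrow> pl (ng x) y = mv_one ng cst"

definition mv_sup :: "('a \<Rightarrow> 'a \<Rightarrow> 'a) \<Rightarrow> ('a \<Rightarrow> 'a) \<Rightarrow> 'a \<Rightarrow> 'a \<Rightarrow> 'a" where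
  "mv_sup pl ng x y = pl (ng (pl (ng x) y)) y"

definition mv_inf :: "('a \<Rightarrow> 'a \<Rightarrow> 'a) \<Rightarrow> ('a \<Rightarrow> 'a) \<Rightarrow> 'a \<Rightarrow> 'a \<Rightarrow> 'a" where
  "mv_inf pl ng x y = ng (mv_sup pl ng (ng x) (ng y))"

definition pavelka_algebra :: "'a set \<Rightarrow> ('a \<Rightarrow> 'a \<Rightarrow> 'a) \<Rightarrow> ('a \<Rightarrow> 'a) \<Rightarrow> (rat \<Rightarrow> 'a) \<Rightarrow> bool" where
  "pavelka_algebra A pl ng cst \<longleftrightarrow>
     mv_algebra A pl ng (cst 0) \<and>
     (\<forall>r\<in>rconst. cst r \<in> A) \<and>
     (\<forall>r\<in>rconst. \<forall>s\<in>rconst. pl (cst r) (cst s) = cst (min (r + s) 1)) \<and>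
     (\<forall>r\<in>rconst. ng (cst r) = cst (1 - r))"

definition closure_operator :: "'a set \<Rightarrow> ('a \<Rightarrow> 'a \<Rightarrow> 'a) \<Rightarrow> ('a \<Rightarrow> 'a) \<Rightarrow> (rat \<Rightarrow> 'a) \<Rightarrow> ('a \<Rightarrow> 'a) \<Rightarrow> bool" where
  "closure_operator A pl ng cst C \<longleftrightarrow>
     (\<forall>x\<in>A. C x \<in> A) \<and>
     (\<forall>x\<in>A. \<forall>y\<in>A. mv_le pl ng cst x y \<longrightarrow> mv_le pl ng cst (C x) (C y)) \<and>
     (\<forall>x\<in>A. mv_le pl ng cst x (C x)) \<and>
     (\<forall>x\<in>A. C (C x) = C x)"

definition monadic_pavelka :: "'a set \<Rightarrow> ('a \<Rightarrow> 'a \<Rightarrow> 'a) \<Rightarrow> ('a \<Rightarrow> 'a) \<Rightarrow> (rat \<Rightarrow> 'a) \<Rightarrow> ('a \<Rightarrow> 'a) \<Rightarrow> bool" where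
  "monadic_pavelka A pl ng cst E \<longleftrightarrow>
     pavelka_algebra A pl ng cst \<and> closure_operator A pl ng cst E \<and>
     (\<forall>x\<in>A. E (ng (E x)) = ng (E x)) \<and>
     (\<forall>r\<in>rconst. \<forall>x\<in>A. mv_mult pl ng (cst r) (E x) = E (mv_mult pl ng (cst r) x))"

definition tense_pavelka :: "'a set \<Rightarrow> ('a \<Rightarrow> 'a \<Rightarrow> 'a) \<Rightarrow> ('a \<Rightarrow> 'a) \<Rightarrow> (rat \<Rightarrow> 'a) \<Rightarrow> ('a \<Rightarrow> 'a) \<Rightarrow> ('a \<Rightarrow> 'a) \<Rightarrow> bool" where
  "tense_pavelka A pl ng cst G H \<longleftrightarrow>
     pavelka_algebra A pl ng cst \<and>
     (\<forall>x\<in>A. G x \<in> A) \<and> (\<forall>x\<in>A. H x \<in> A) \<and>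
     (\<forall>x\<in>A. \<forall>y\<in>A. G (mv_inf pl ng x y) = mv_inf pl ng (G x) (G y) \<and>
                    H (mv_inf pl ng x y) = mv_inf pl ng (H x) (H y)) \<and>
     (\<forall>r\<in>rconst. \<forall>x\<in>A. mv_impl pl ng (cst r) (G x) = G (mv_impl pl ng (cst r) x) \<and>
                        mv_impl pl ng (cst r) (H x) = H (mv_impl pl ng (cst r) x)) \<and>
     (\<forall>x\<in>A. mv_le pl ng cst (ng (H (ng (G x)))) x \<and> mv_le pl ng cst (ng (G (ng (H x)))) x)"

end

theory Submission
  imports Defs
begin

locale pav =
  fixes A :: "'a set" and pl :: "'a \<Rightarrow> 'a \<Rightarrow> 'a" and ng :: "'a \<Rightarrow> 'a" and cst :: "rat \<Rightarrow> 'a"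
  assumes P: "pavelka_algebra A pl ng cst"
begin

abbreviation "mle \<equiv> mv_le pl ng cst"
abbreviation "one \<equiv> ng (cst 0)"
abbreviation "msup \<equiv> mv_sup pl ng"
abbreviation "minf \<equiv> mv_inf pl ng"

lemma MV: "mv_algebra A pl ng (cst 0)" using P unfolding pavelka_algebra_def by blast

lemma z_in[simp]: "cst 0 \<in> A" using MV unfolding mv_algebra_def by blast
lemma pl_in[simp]: "x \<in> A \<Longrightarrow> y \<in> A \<Longrightarrow> pl x y \<in> A" using MV unfolding mv_algebra_def by blast
lemma ng_in[simp]: "x \<in> A \<Longrightarrow> ng x \<in> A" using MV unfolding mv_algebra_def by blast
lemma assoc: "x \<in> A \<Longrightarrow> y \<in> A \<Longrightarrow> w \<in> A \<Longrightarrow> pl x (pl y w) = pl (pl x y) w"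
  using MV unfolding mv_algebra_def by blast
lemma comm: "x \<in> A \<Longrightarrow> y \<in> A \<Longrightarrow> pl x y = pl y x" using MV unfolding mv_algebra_def by blast
lemma zr[simp]: "x \<in> A \<Longrightarrow> pl x (cst 0) = x" using MV unfolding mv_algebra_def by blast
lemma inv[simp]: "x \<in> A \<Longrightarrow> ng (ng x) = x" using MV unfolding mv_algebra_def by blast
lemma oner[simp]: "x \<in> A \<Longrightarrow> pl x one = one" using MV unfolding mv_algebra_def by blast
lemma luk: "x \<in> A \<Longrightarrow> y \<in> A \<Longrightarrow> pl (ng (pl (ng x) y)) y = pl (ng (pl (ng y) x)) x"
  using MV unfolding mv_algebra_def by blast

lemma zl[simp]: "x \<in> A \<Longrightarrow> pl (cst 0) x = x" using comm[of "cst 0" x] by simp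
lemma onel[simp]: "x \<in> A \<Longrightarrow> pl one x = one" using comm[of one x] by simp

lemma compl[simp]: "x \<in> A \<Longrightarrow> pl (ng x) x = one"
  using luk[of one x] by simp

lemma le_def': "mle x y \<longleftrightarrow> pl (ng x) y = one" unfolding mv_le_def mv_one_def by simp

lemma le_refl: "x \<in> A \<Longrightarrow> mle x x" by (simp add: le_def')

lemma le_ex: assumes "x \<in> A" "y \<in> A" shows "mle x y \<longleftrightarrow> (\<exists>c\<in>A. pl x c = y)"
proof
  assume "mle x y"
  hence h: "pl (ng x) y = one" by (simp add: le_def')
  show "\<exists>c\<in>A. pl x c = y"
  proof (intro bexI)
    show "pl x (ng (pl (ng y) x)) = y"
      using luk[of x y] h assms comm[of x "ng (pl (ng y) x)"] by simp
  qed (use assms in simp)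
next
  assume "\<exists>c\<in>A. pl x c = y"
  then obtain c where c: "c \<in> A" "pl x c = y" by blast
  have "pl (ng x) (pl x c) = pl (pl (ng x) x) c" using assoc[of "ng x" x c] assms c(1) by simp
  also have "\<dots> = one" using assms c(1) by simp
  finally show "mle x y" using c(2) by (simp add: le_def')
qed

lemma le_antisym: "x \<in> A \<Longrightarrow> y \<in> A \<Longrightarrow> mle x y \<Longrightarrow> mle y x \<Longrightarrow> x = y"
  using luk[of x y] by (simp add: le_def')

lemma le_trans: assumes "x \<in> A" "y \<in> A" "z \<in> A" "mle x y" "mle y z" shows "mle x z"
proof -
  obtain a where a: "a \<in> A" "pl x a = y" using assms le_ex by blast
  obtain b where b: "b \<in> A" "pl y b = z" using assms le_ex by blast
  have "pl x (pl a b) = z" using a b assms assoc by simp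
  thus ?thesis using le_ex[of x z] assms a b by (auto intro!: bexI[of _ "pl a b"])
qed

lemma ng_anti: "x \<in> A \<Longrightarrow> y \<in> A \<Longrightarrow> mle x y \<Longrightarrow> mle (ng y) (ng x)"
  using comm[of y "ng x"] by (simp add: le_def')

lemma pl_mono: assumes "x \<in> A" "y \<in> A" "z \<in> A" "mle x y" shows "mle (pl x z) (pl y z)"
proof -
  obtain a where a: "a \<in> A" "pl x a = y" using assms le_ex by blast
  have "pl (pl x z) a = pl x (pl z a)" using a assms assoc[of x z a] by simp
  also have "\<dots> = pl x (pl a z)" using a assms comm[of z a] by simp
  also have "\<dots> = pl y z" using a assms assoc[of x a z] by simp
  finally show ?thesis using le_ex[of "pl x z" "pl y z"] assms a by auto
qed

lemma sup_in[simp]: "x \<in> A \<Longrightarrow> y \<in> A \<Longrightarrow> msup x y \<in> A" by (simp add: mv_sup_def)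
lemma inf_in[simp]: "x \<in> A \<Longrightarrow> y \<in> A \<Longrightarrow> minf x y \<in> A" by (simp add: mv_inf_def)

lemma sup_ub2: "x \<in> A \<Longrightarrow> y \<in> A \<Longrightarrow> mle y (msup x y)"
proof -
  assume h: "x \<in> A" "y \<in> A"
  have "pl y (ng (pl (ng x) y)) = pl (ng (pl (ng x) y)) y" using h comm[of y "ng (pl (ng x) y)"] by simp
  thus ?thesis unfolding mv_sup_def using le_ex[of y "pl (ng (pl (ng x) y)) y"] h by auto
qed

lemma sup_ub1: "x \<in> A \<Longrightarrow> y \<in> A \<Longrightarrow> mle x (msup x y)"
proof -
  assume h: "x \<in> A" "y \<in> A"
  have "pl x (ng (pl (ng y) x)) = pl (ng (pl (ng x) y)) y" using h comm[of x "ng (pl (ng y) x)"] luk[of x y] by simp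
  thus ?thesis unfolding mv_sup_def using le_ex[of x "pl (ng (pl (ng x) y)) y"] h by auto
qed

lemma sup_lub: assumes "x \<in> A" "y \<in> A" "z \<in> A" "mle x z" "mle y z" shows "mle (msup x y) z"
proof -
  have zz: "z = pl (ng (pl (ng z) y)) y" using luk[of z y] assms by (simp add: le_def')
  have "mle (pl (ng z) y) (pl (ng x) y)" using pl_mono ng_anti assms by simp
  hence "mle (ng (pl (ng x) y)) (ng (pl (ng z) y))" using ng_anti assms by simp
  hence "mle (pl (ng (pl (ng x) y)) y) (pl (ng (pl (ng z) y)) y)" using pl_mono assms by simp
  thus ?thesis unfolding mv_sup_def using zz by simp
qed

lemma ng_inf: "x \<in> A \<Longrightarrow> y \<in> A \<Longrightarrow> ng (minf x y) = msup (ng x) (ng y)"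
  by (simp add: mv_inf_def)
lemma sup_ng: "x \<in> A \<Longrightarrow> y \<in> A \<Longrightarrow> msup x y = ng (minf (ng x) (ng y))"
  by (simp add: mv_inf_def)

lemma inf_lb1: "x \<in> A \<Longrightarrow> y \<in> A \<Longrightarrow> mle (minf x y) x"
  unfolding mv_inf_def using ng_anti[OF _ _ sup_ub1[of "ng x" "ng y"]] by simp
lemma inf_lb2: "x \<in> A \<Longrightarrow> y \<in> A \<Longrightarrow> mle (minf x y) y"
  unfolding mv_inf_def using ng_anti[OF _ _ sup_ub2[of "ng x" "ng y"]] by simp
lemma inf_glb: assumes "x \<in> A" "y \<in> A" "w \<in> A" "mle w x" "mle w y" shows "mle w (minf x y)"
proof -
  have "mle (msup (ng x) (ng y)) (ng w)" using sup_lub ng_anti assms by simp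
  thus ?thesis unfolding mv_inf_def using ng_anti[of "msup (ng x) (ng y)" "ng w"] assms by simp
qed

end

lemma main:
  assumes "pavelka_algebra A pl ng cst"
    and "closure_operator A pl ng cst E"
  shows "monadic_pavelka A pl ng cst E \<longleftrightarrow>
         tense_pavelka A pl ng cst (\<lambda>x. ng (E (ng x))) (\<lambda>x. ng (E (ng x)))"
proof -
  interpret pav A pl ng cst using assms(1) by unfold_locales
  have Ein[simp]: "\<And>x. x \<in> A \<Longrightarrow> E x \<in> A" using assms(2) unfolding closure_operator_def by blast
  have Emono: "\<And>x y. x \<in> A \<Longrightarrow> y \<in> A \<Longrightarrow> mle x y \<Longrightarrow> mle (E x) (E y)"
    using assms(2) unfolding closure_operator_def by blast
  have Eext: "\<And>x. x \<in> A \<Longrightarrow> mle x (E x)" using assms(2) unfolding closure_operator_def by blast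
  have Eidem[simp]: "\<And>x. x \<in> A \<Longrightarrow> E (E x) = E x" using assms(2) unfolding closure_operator_def by blast
  show ?thesis
  proof
    assume M: "monadic_pavelka A pl ng cst E"
    have ax1: "\<And>x. x \<in> A \<Longrightarrow> E (ng (E x)) = ng (E x)" using M unfolding monadic_pavelka_def by blast
    have ax2: "\<And>r x. r \<in> rconst \<Longrightarrow> x \<in> A \<Longrightarrow> mv_mult pl ng (cst r) (E x) = E (mv_mult pl ng (cst r) x)"
      using M unfolding monadic_pavelka_def by blast
    have cin: "\<And>r. r \<in> rconst \<Longrightarrow> cst r \<in> A" using assms(1) unfolding pavelka_algebra_def by blast
    have inffix: "E (minf c d) = minf c d" if "c \<in> A" "d \<in> A" "E c = c" "E d = d" for c d
    proof (rule le_antisym)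
      have "mle (E (minf c d)) c" using Emono[OF inf_in[OF that(1,2)] that(1) inf_lb1[OF that(1,2)]] that by simp
      moreover have "mle (E (minf c d)) d" using Emono[OF inf_in[OF that(1,2)] that(2) inf_lb2[OF that(1,2)]] that by simp
      ultimately show "mle (E (minf c d)) (minf c d)" using inf_glb that by simp
      show "mle (minf c d) (E (minf c d))" using Eext that by simp
    qed (use that in simp_all)
    have supfix: "E (msup (E a) (E b)) = msup (E a) (E b)" if "a \<in> A" "b \<in> A" for a b
    proof -
      have "minf (ng (E a)) (ng (E b)) = E (minf (ng (E a)) (ng (E b)))"
        using inffix[of "ng (E a)" "ng (E b)"] ax1 that by simp
      hence "msup (E a) (E b) = ng (E (minf (ng (E a)) (ng (E b))))" using sup_ng that by simp
      thus ?thesis using ax1 that by simp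
    qed
    have Esup: "E (msup a b) = msup (E a) (E b)" if "a \<in> A" "b \<in> A" for a b
    proof (rule le_antisym)
      have "mle (msup a b) (msup (E a) (E b))"
      proof (rule sup_lub)
        show "mle a (msup (E a) (E b))" using le_trans[OF _ _ _ Eext[of a] sup_ub1[of "E a" "E b"]] that by simp
        show "mle b (msup (E a) (E b))" using le_trans[OF _ _ _ Eext[of b] sup_ub2[of "E a" "E b"]] that by simp
      qed (use that in simp_all)
      thus "mle (E (msup a b)) (msup (E a) (E b))" using Emono[of "msup a b" "msup (E a) (E b)"] supfix that by simp
      show "mle (msup (E a) (E b)) (E (msup a b))"
        using sup_lub Emono sup_ub1 sup_ub2 that by simp
    qed (use that in simp_all)
    show "tense_pavelka A pl ng cst (\<lambda>x. ng (E (ng x))) (\<lambda>x. ng (E (ng x)))"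
      unfolding tense_pavelka_def
    proof (intro conjI ballI)
      show "pavelka_algebra A pl ng cst" by (fact assms(1))
    next
      fix x y assume xy: "x \<in> A" "y \<in> A"
      have "ng (E (ng (minf x y))) = ng (E (msup (ng x) (ng y)))" using xy by (simp add: ng_inf)
      also have "\<dots> = ng (msup (E (ng x)) (E (ng y)))" using Esup[of "ng x" "ng y"] xy by simp
      also have "\<dots> = minf (ng (E (ng x))) (ng (E (ng y)))" using xy by (simp add: mv_inf_def)
      finally show "ng (E (ng (minf x y))) = minf (ng (E (ng x))) (ng (E (ng y)))" .
      thus "ng (E (ng (minf x y))) = minf (ng (E (ng x))) (ng (E (ng y)))" .
    next
      fix r x assume r: "r \<in> rconst" and x: "x \<in> A"
      have "mv_mult pl ng (cst r) (E (ng x)) = E (mv_mult pl ng (cst r) (ng x))" using ax2 r x by simp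
      hence "ng (pl (ng (cst r)) (ng (E (ng x)))) = E (ng (pl (ng (cst r)) x))"
        using x cin[OF r] by (simp add: mv_mult_def)
      hence "ng (ng (pl (ng (cst r)) (ng (E (ng x))))) = ng (E (ng (pl (ng (cst r)) x)))"
        by simp
      hence "pl (ng (cst r)) (ng (E (ng x))) = ng (E (ng (pl (ng (cst r)) x)))"
        using x cin[OF r] by simp
      thus "mv_impl pl ng (cst r) (ng (E (ng x))) = ng (E (ng (mv_impl pl ng (cst r) x)))"
        by (simp add: mv_impl_def)
      thus "mv_impl pl ng (cst r) (ng (E (ng x))) = ng (E (ng (mv_impl pl ng (cst r) x)))" .
    next
      fix x assume x: "x \<in> A"
      have "ng (ng (E (ng (ng (ng (E (ng x))))))) = ng (E (ng x))" using ax1 x by simp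
      moreover have "mle (ng (E (ng x))) x" using ng_anti[OF _ _ Eext[of "ng x"]] x by simp
      ultimately show "mle (ng (ng (E (ng (ng (ng (E (ng x)))))))) x" by simp
      thus "mle (ng (ng (E (ng (ng (ng (E (ng x)))))))) x" .
    qed simp_all
  next
    assume T: "tense_pavelka A pl ng cst (\<lambda>x. ng (E (ng x))) (\<lambda>x. ng (E (ng x)))"
    have pt2: "\<And>r x. r \<in> rconst \<Longrightarrow> x \<in> A \<Longrightarrow> mv_impl pl ng (cst r) (ng (E (ng x))) = ng (E (ng (mv_impl pl ng (cst r) x)))"
      using T unfolding tense_pavelka_def by blast
    have pt3: "\<And>x. x \<in> A \<Longrightarrow> mle (ng (ng (E (ng (ng (ng (E (ng x)))))))) x"
      using T unfolding tense_pavelka_def by blast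
    have cin: "\<And>r. r \<in> rconst \<Longrightarrow> cst r \<in> A" using assms(1) unfolding pavelka_algebra_def by blast
    show "monadic_pavelka A pl ng cst E"
      unfolding monadic_pavelka_def
    proof (intro conjI ballI)
      fix x assume x: "x \<in> A"
      show "E (ng (E x)) = ng (E x)"
      proof (rule le_antisym)
        show "mle (E (ng (E x))) (ng (E x))" using pt3[of "ng (E x)"] x by simp
        show "mle (ng (E x)) (E (ng (E x)))" using Eext x by simp
      qed (use x in simp_all)
    next
      fix r x assume r: "r \<in> rconst" and x: "x \<in> A"
      have "mv_impl pl ng (cst r) (ng (E (ng (ng x)))) = ng (E (ng (mv_impl pl ng (cst r) (ng x))))"
        using pt2[of r "ng x"] r x by simp
      hence "pl (ng (cst r)) (ng (E x)) = ng (E (ng (pl (ng (cst r)) (ng x))))"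
        using x by (simp add: mv_impl_def)
      hence "ng (pl (ng (cst r)) (ng (E x))) = ng (ng (E (ng (pl (ng (cst r)) (ng x)))))"
        by simp
      hence "ng (pl (ng (cst r)) (ng (E x))) = E (ng (pl (ng (cst r)) (ng x)))"
        using x cin[OF r] by simp
      thus "mv_mult pl ng (cst r) (E x) = E (mv_mult pl ng (cst r) x)"
        by (simp add: mv_mult_def)
    qed (use assms in simp_all)
  qed
qed

theorem theorem14:
  fixes A :: "'a set" and pl :: "'a \<Rightarrow> 'a \<Rightarrow> 'a" and ng :: "'a \<Rightarrow> 'a"
    and cst :: "rat \<Rightarrow> 'a" and E :: "'a \<Rightarrow> 'a"
  assumes "pavelka_algebra A pl ng cst"
    and "closure_operator A pl ng cst E"
  shows "monadic_pavelka A pl ng cst E \<longleftrightarrow>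
         tense_pavelka A pl ng cst (\<lambda>x. ng (E (ng x))) (\<lambda>x. ng (E (ng x)))"
  using main[OF assms] .

end
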